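(* For $n\ge 1$ let $\gamma_n$ be the unique closed geodesic on the modular surface $\Sigma_{\mathrm{Mod}}$ lifting to the geodesic $1/n$ on the once-punctured torus $\Sigma_{1,1}$ (under the 6-fold cover $\Sigma_{1,1}\to\Sigma_{\mathrm{Mod}}$). For $\Gamma_n:=\{\gamma_i\}_{i=1}^n$, the total length satisfies $\ell(\Gamma_n)\asymp n^2$.
   Context: $\Sigma_{\mathrm{Mod}}=\mathbb{H}^2/\mathrm{PSL}(2,\mathbb{Z})$ with its hyperbolic metric; $\Sigma_{1,1}$ is the once-punctured torus with the pulled-back metric, and $1/n$ denotes the closed geodesic in the free homotopy class of the simple closed curve of slope $1/n$. $\ell(\Gamma_n)=\sum_{i=1}^n\ell(\gamma_i)$. $f(n)\asymp g(n)$ means there are constants $A>0,B,C>0,D$ with $Ag(n)+B\le f(n)\le Cg(n)+D$ for all $n$. *)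

theory Defs
  imports "HOL-Analysis.Analysis"
begin

text \<open>Integer 2x2 matrices (a,b,c,d) = [[a,b],[c,d]].\<close>
type_synonym mat2 = "int \<times> int \<times> int \<times> int"

fun mmul :: "mat2 \<Rightarrow> mat2 \<Rightarrow> mat2" where
  "mmul (a,b,c,d) (e,f,g,h) = (a*e + b*g, a*f + b*h, c*e + d*g, c*f + d*h)"

fun mneg :: "mat2 \<Rightarrow> mat2" where
  "mneg (a,b,c,d) = (-a,-b,-c,-d)"

fun mdet :: "mat2 \<Rightarrow> int" where
  "mdet (a,b,c,d) = a*d - b*c"

primrec mpow :: "mat2 \<Rightarrow> nat \<Rightarrow> mat2" where
  "mpow M 0 = (1,0,0,1)"
| "mpow M (Suc k) = mmul M (mpow M k)"

definition SL2Z :: "mat2 set" where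
  "SL2Z = {M. mdet M = 1}"

definition upper_half :: "complex set" where
  "upper_half = {z. Im z > 0}"

definition hdist :: "complex \<Rightarrow> complex \<Rightarrow> real" where
  "hdist z w = arcosh (1 + (cmod (z - w))\<^sup>2 / (2 * Im z * Im w))"

fun moebius :: "mat2 \<Rightarrow> complex \<Rightarrow> complex" where
  "moebius (a,b,c,d) z = (of_int a * z + of_int b) / (of_int c * z + of_int d)"

text \<open>Translation length of a deck transformation: the length of the closed
  geodesic in its free homotopy class.\<close>
definition transl_len :: "mat2 \<Rightarrow> real" where
  "transl_len M = (INF z\<in>upper_half. hdist z (moebius M z))"

text \<open>Length of the primitive closed geodesic on the modular surface
  H^2/PSL(2,Z) underlying the (possibly multiply traversed) closed geodesic
  of the deck element M in PSL(2,Z): minimal translation length of a root of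
  +-M in SL(2,Z).\<close>
definition modular_geod_len :: "mat2 \<Rightarrow> real" where
  "modular_geod_len M = Inf {transl_len R | R k. R \<in> SL2Z \<and> k \<ge> 1 \<and>
                                  (mpow R k = M \<or> mpow R k = mneg M)}"

text \<open>The once-punctured (modular) torus is H^2/G', G' the commutator subgroup
  of PSL(2,Z), freely generated by the images of torusA and torusB, which
  represent the curves of slope 1/0 and 0/1.\<close>
definition torusA :: mat2 where "torusA = (2,1,1,1)"
definition torusB :: mat2 where "torusB = (1,1,1,2)"

text \<open>Deck element of the simple closed curve of slope 1/n.\<close>
definition slope_elt :: "nat \<Rightarrow> mat2" where
  "slope_elt n = mmul torusA (mpow torusB n)"

definition gamma_len :: "nat \<Rightarrow> real" where
  "gamma_len n = modular_geod_len (slope_elt n)"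

definition total_len :: "nat \<Rightarrow> real" where
  "total_len n = (\<Sum>i=1..n. gamma_len i)"

end

theory Submission
  imports Defs
begin


lemma moeb_facts:
  fixes a b c d :: int and z :: complex
  assumes "a*d - b*c = 1" "Im z > 0"
  defines "w \<equiv> of_int c * z + of_int d"
  shows "w \<noteq> 0" "Im (moebius (a,b,c,d) z) = Im z / (cmod w)\<^sup>2"
    "z - moebius (a,b,c,d) z = (of_int c * z\<^sup>2 + of_int (d-a) * z - of_int b) / w"
proof -
  show w0: "w \<noteq> 0"
  proof
    assume "w = 0"
    then have "real_of_int c * Im z = 0" "real_of_int c * Re z + d = 0"
      unfolding w_def by (auto simp: complex_eq_iff)
    then have "c = 0" "d = 0" using assms(2) by auto
    then show False using assms(1) by simp
  qed
  have r: "real_of_int a * real_of_int d = 1 + real_of_int b * real_of_int c"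
    using assms(1) by (metis add.commute diff_eq_eq of_int_1 of_int_add of_int_mult)
  have "moebius (a,b,c,d) z = (of_int a * z + of_int b) / w" by (simp add: w_def)
  then show "Im (moebius (a,b,c,d) z) = Im z / (cmod w)\<^sup>2"
    using w0 r unfolding w_def
    by (simp add: Im_divide cmod_power2 algebra_simps)
  show "z - moebius (a,b,c,d) z = (of_int c * z\<^sup>2 + of_int (d-a) * z - of_int b) / w"
    using w0 unfolding w_def by (simp add: field_simps power2_eq_square)
qed

lemma hdist_moeb:
  fixes a b c d :: int and z :: complex
  assumes "a*d - b*c = 1" "Im z > 0"
  defines "P \<equiv> of_int c * z\<^sup>2 + of_int (d-a) * z - of_int b"
  shows "hdist z (moebius (a,b,c,d) z) = arcosh (1 + (cmod P)\<^sup>2 / (2 * (Im z)\<^sup>2))"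
proof -
  define w where "w = of_int c * z + of_int d"
  note f = moeb_facts[OF assms(1,2), folded w_def P_def]
  have wp: "cmod w > 0" using f(1) by simp
  have "(cmod (z - moebius (a,b,c,d) z))\<^sup>2 / (2 * Im z * Im (moebius (a,b,c,d) z))
      = ((cmod P)\<^sup>2 / (cmod w)\<^sup>2) / (2 * Im z * (Im z / (cmod w)\<^sup>2))"
    unfolding f(2) f(3) by (simp add: norm_divide power_divide)
  also have "\<dots> = (cmod P)\<^sup>2 / (2 * (Im z)\<^sup>2)"
    using wp assms(2) by (simp add: field_simps power2_eq_square)
  finally show ?thesis by (simp add: hdist_def)
qed

lemma P_bound:
  fixes a b c d :: int and z :: complex
  assumes "a*d - b*c = 1" "Im z > 0"
  defines "P \<equiv> of_int c * z\<^sup>2 + of_int (d-a) * z - of_int b"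
  shows "(Im z)\<^sup>2 * ((real_of_int (a+d))\<^sup>2 - 4) \<le> (cmod P)\<^sup>2"
proof -
  have r: "real_of_int a * real_of_int d = 1 + real_of_int b * real_of_int c"
    using assms(1) by (metis add.commute diff_eq_eq of_int_1 of_int_add of_int_mult)
  obtain x y where z: "z = Complex x y" by (cases z)
  define Q where "Q = c*x^2 + (d-a)*x - b"
  have "(cmod P)\<^sup>2 = (Q - c*y^2)^2 + (y*(2*c*x + (d-a)))^2"
    unfolding P_def z Q_def cmod_power2 by (simp add: power2_eq_square algebra_simps)
  also have "\<dots> = (Q + c*y^2)^2 + y^2 * ((real_of_int (a+d))\<^sup>2 - 4)"
    unfolding Q_def using r by (simp add: power2_eq_square algebra_simps)
  finally show ?thesis using z by simp
qed

lemma arcosh_mono_le: "1 \<le> (x::real) \<Longrightarrow> x \<le> y \<Longrightarrow> arcosh x \<le> arcosh y"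
  by (metis arcosh_less_iff_real linorder_not_less order_trans)

lemma arcosh_ge_ln: "1 \<le> (x::real) \<Longrightarrow> ln x \<le> arcosh x"
proof -
  assume x: "1 \<le> x"
  have "x \<le> x + sqrt (x^2 - 1)" using x by simp
  then have "ln x \<le> ln (x + sqrt (x^2 - 1))" using x by (subst ln_le_cancel_iff) (auto intro: add_pos_nonneg)
  then show ?thesis using x by (simp add: arcosh_real_def)
qed

lemma arcosh_le_ln: "1 \<le> (x::real) \<Longrightarrow> arcosh x \<le> ln (2*x)"
proof -
  assume x: "1 \<le> x"
  have "sqrt (x^2 - 1) \<le> x" using x by (simp add: real_sqrt_le_iff' )
  then have "x + sqrt (x^2 - 1) \<le> 2*x" by simp
  moreover have "0 < x + sqrt (x^2 - 1)" using x by (simp add: add_pos_nonneg)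
  ultimately show ?thesis using x by (simp add: arcosh_real_def)
qed

lemma hdist_lower:
  fixes a b c d :: int and z :: complex
  assumes "a*d - b*c = 1" "Im z > 0" "\<bar>a+d\<bar> \<ge> 2"
  shows "arcosh ((real_of_int (a+d))\<^sup>2 / 2 - 1) \<le> hdist z (moebius (a,b,c,d) z)"
proof -
  define P where "P = of_int c * z\<^sup>2 + of_int (d-a) * z - (of_int b :: complex)"
  have h: "hdist z (moebius (a,b,c,d) z) = arcosh (1 + (cmod P)\<^sup>2 / (2 * (Im z)\<^sup>2))"
    using hdist_moeb[OF assms(1,2)] P_def by simp
  have pb: "(Im z)\<^sup>2 * ((real_of_int (a+d))\<^sup>2 - 4) \<le> (cmod P)\<^sup>2"
    using P_bound[OF assms(1,2)] P_def by simp
  have y2: "(Im z)\<^sup>2 > 0" using assms(2) by simp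
  have "((real_of_int (a+d))\<^sup>2 - 4) \<le> (cmod P)\<^sup>2 / (Im z)\<^sup>2"
    using pb y2 by (simp add: field_simps)
  then have le: "(real_of_int (a+d))\<^sup>2 / 2 - 1 \<le> 1 + (cmod P)\<^sup>2 / (2 * (Im z)\<^sup>2)"
    by (simp add: field_simps)
  have "(2::real)^2 \<le> (real_of_int (a+d))\<^sup>2"
    using assms(3) by (metis abs_le_square_iff abs_numeral of_int_abs of_int_le_iff of_int_numeral)
  then have one: "1 \<le> (real_of_int (a+d))\<^sup>2 / 2 - 1" by simp
  show ?thesis unfolding h by (rule arcosh_mono_le[OF one le])
qed

lemma hdist_nonneg_moeb:
  fixes a b c d :: int and z :: complex
  assumes "a*d - b*c = 1" "Im z > 0"
  shows "0 \<le> hdist z (moebius (a,b,c,d) z)"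
  using hdist_moeb[OF assms] by (simp add: arcosh_nonneg_real)

lemma transl_lower:
  fixes a b c d :: int
  assumes "a*d - b*c = 1" "\<bar>a+d\<bar> \<ge> 2"
  shows "arcosh ((real_of_int (a+d))\<^sup>2 / 2 - 1) \<le> transl_len (a,b,c,d)"
  unfolding transl_len_def
proof (rule cINF_greatest)
  show "upper_half \<noteq> {}" unfolding upper_half_def by (auto intro!: exI[of _ \<i>])
  fix z assume "z \<in> upper_half"
  then show "arcosh ((real_of_int (a+d))\<^sup>2 / 2 - 1) \<le> hdist z (moebius (a,b,c,d) z)"
    using hdist_lower[OF assms(1) _ assms(2)] by (simp add: upper_half_def)
qed

lemma transl_upper:
  fixes a b c d :: int
  assumes "a*d - b*c = 1"
  shows "transl_len (a,b,c,d) \<le> arcosh (1 + ((real_of_int (b+c))\<^sup>2 + (real_of_int (d-a))\<^sup>2) / 2)"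
proof -
  have bdd: "bdd_below ((\<lambda>z. hdist z (moebius (a,b,c,d) z)) ` upper_half)"
    by (rule bdd_belowI[of _ 0]) (use hdist_nonneg_moeb[OF assms] in \<open>auto simp: upper_half_def simp del: moebius.simps\<close>)
  have i: "\<i> \<in> upper_half" by (simp add: upper_half_def)
  have "transl_len (a,b,c,d) \<le> hdist \<i> (moebius (a,b,c,d) \<i>)"
    unfolding transl_len_def by (rule cINF_lower[OF bdd i])
  also have "\<dots> = arcosh (1 + ((real_of_int (b+c))\<^sup>2 + (real_of_int (d-a))\<^sup>2) / 2)"
  proof -
    have eq: "of_int c * \<i>\<^sup>2 + of_int (d - a) * \<i> - of_int b = Complex (-(b+c)) (d-a)"
      by (simp add: complex_eq_iff)
    have "(cmod (Complex (-(b+c)) (d-a)))\<^sup>2 = (real_of_int (b+c))\<^sup>2 + (real_of_int (d-a))\<^sup>2"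
      unfolding cmod_power2 by (simp add: power2_eq_square algebra_simps)
    then show ?thesis using hdist_moeb[OF assms, of \<i>] eq by simp
  qed
  finally show ?thesis .
qed

lemma moeb_neg: "moebius (mneg M) z = moebius M z"
proof -
  have L: "(- p - q) / (- r - s) = (p + q) / (r + s)" for p q r s :: complex
  proof -
    have "- p - q = -(p+q)" "- r - s = -(r+s)" by simp_all
    then show ?thesis by (simp only: minus_divide_divide)
  qed
  show ?thesis by (cases M) (simp add: L)
qed

lemma transl_neg: "transl_len (mneg M) = transl_len M"
  unfolding transl_len_def moeb_neg ..


fun sq :: "int \<Rightarrow> nat \<Rightarrow> int" where
  "sq t 0 = 0"
| "sq t (Suc 0) = 1"
| "sq t (Suc (Suc k)) = t * sq t (Suc k) - sq t k"

fun tau :: "int \<Rightarrow> nat \<Rightarrow> int" where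
  "tau t 0 = 2"
| "tau t (Suc 0) = t"
| "tau t (Suc (Suc k)) = t * tau t (Suc k) - tau t k"

lemma mpow_cheb:
  assumes "a*d - b*c = 1"
  shows "mpow (a,b,c,d) (Suc k) =
    (sq (a+d) (Suc k) * a - sq (a+d) k, sq (a+d) (Suc k) * b,
     sq (a+d) (Suc k) * c, sq (a+d) (Suc k) * d - sq (a+d) k)"
proof (induction k)
  case 0
  then show ?case by simp
next
  case (Suc k)
  have ad: "a*d = 1 + b*c" using assms by simp
  have ad2: "a * (d * x) = x + b * (c * x)" for x :: int
  proof -
    have "a*(d*x) = (a*d)*x" by (simp add: mult.assoc)
    also have "\<dots> = (1+b*c)*x" using ad by simp
    also have "\<dots> = x + b*(c*x)" by (simp add: algebra_simps)
    finally show ?thesis .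
  qed
  let ?s = "sq (a+d) (Suc k)" and ?r = "sq (a+d) k"
  have "mpow (a,b,c,d) (Suc (Suc k)) = mmul (a,b,c,d) (?s*a - ?r, ?s*b, ?s*c, ?s*d - ?r)"
    using Suc by simp
  also have "\<dots> = (((a+d) * ?s - ?r) * a - ?s, ((a+d) * ?s - ?r) * b,
     ((a+d) * ?s - ?r) * c, ((a+d) * ?s - ?r) * d - ?s)"
    by (simp add: algebra_simps ad2)
  finally show ?case by simp
qed

lemma tau_sq2: "tau t (Suc k) = sq t (Suc k) * t - 2 * sq t k \<and>
  tau t (Suc (Suc k)) = sq t (Suc (Suc k)) * t - 2 * sq t (Suc k)"
proof (induction k)
  case 0 then show ?case by simp
next
  case (Suc k)
  then have e2: "tau t (Suc k) = sq t (Suc k) * t - 2 * sq t k"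
    and e1: "tau t (Suc (Suc k)) = sq t (Suc (Suc k)) * t - 2 * sq t (Suc k)" by auto
  have "tau t (Suc (Suc (Suc k))) = t * (sq t (Suc (Suc k)) * t - 2 * sq t (Suc k)) - (sq t (Suc k) * t - 2 * sq t k)"
    by (subst tau.simps(3), subst e1, subst e2) (rule refl)
  also have "\<dots> = sq t (Suc (Suc (Suc k))) * t - 2 * sq t (Suc (Suc k))"
    by (simp add: algebra_simps)
  finally show ?case using e1 by simp
qed

lemma tau_sq: "tau t (Suc k) = sq t (Suc k) * t - 2 * sq t k"
  using tau_sq2 by blast

lemma tau_cos2:
  assumes "\<bar>t\<bar> \<le> 2"
  shows "real_of_int (tau t k) = 2 * cos (real k * arccos (t/2)) \<and>
         real_of_int (tau t (Suc k)) = 2 * cos (real (Suc k) * arccos (t/2))"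
proof -
  define th where "th = arccos (real_of_int t / 2)"
  have "-2 \<le> t" "t \<le> 2" using assms by (auto simp add: abs_le_iff)
  then have "\<bar>real_of_int t / 2\<bar> \<le> 1" by (auto simp: abs_le_iff)
  then have ct: "real_of_int t = 2 * cos th" unfolding th_def by (simp add: cos_arccos_abs)
  have A: "cos (real (Suc (Suc k)) * th) + cos (real k * th) = 2 * cos th * cos (real (Suc k) * th)" for k
  proof -
    have "real (Suc (Suc k)) * th = real (Suc k) * th + th" "real k * th = real (Suc k) * th - th"
      by (simp_all add: algebra_simps)
    then show ?thesis by (simp only: cos_add cos_diff) (simp add: algebra_simps)
  qed
  have "real_of_int (tau t k) = 2 * cos (real k * th) \<and>
         real_of_int (tau t (Suc k)) = 2 * cos (real (Suc k) * th)"
  proof (induction k)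
    case 0 then show ?case using ct by simp
  next
    case (Suc k)
    have "real_of_int (tau t (Suc (Suc k))) = real_of_int t * real_of_int (tau t (Suc k)) - real_of_int (tau t k)"
      by simp
    also have "\<dots> = 2 * cos (real (Suc (Suc k)) * th)"
      using Suc A[of k] ct by (simp add: algebra_simps)
    finally show ?case using Suc by simp
  qed
  then show ?thesis unfolding th_def .
qed

lemma tau_bound: "\<bar>t\<bar> \<le> 2 \<Longrightarrow> \<bar>tau t k\<bar> \<le> 2"
proof -
  assume "\<bar>t\<bar> \<le> 2"
  then have "real_of_int (tau t k) = 2 * cos (real k * arccos (t/2))" using tau_cos2 by blast
  then have "\<bar>real_of_int (tau t k)\<bar> \<le> 2" by (simp add: abs_mult)
  then show ?thesis by linarith
qed

lemma sq_grow:
  assumes "\<bar>t\<bar> \<ge> 3"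
  shows "\<bar>sq t (Suc k)\<bar> \<ge> \<bar>sq t k\<bar> + 1"
proof (induction k)
  case 0 then show ?case by simp
next
  case (Suc k)
  have "\<bar>sq t (Suc (Suc k))\<bar> \<ge> \<bar>t * sq t (Suc k)\<bar> - \<bar>sq t k\<bar>" by simp
  moreover have "\<bar>t * sq t (Suc k)\<bar> \<ge> 3 * \<bar>sq t (Suc k)\<bar>"
    using assms by (simp add: abs_mult mult_right_mono)
  ultimately show ?case using Suc by linarith
qed

lemma sq_ge3:
  assumes "\<bar>t\<bar> \<ge> 3" "k \<ge> 2"
  shows "\<bar>sq t k\<bar> \<ge> 3"
  using assms(2)
proof (induction k rule: dec_induct)
  case base then show ?case using assms(1) by (simp add: numeral_2_eq_2)
next
  case (step k) then show ?case using sq_grow[OF assms(1), of k] by linarith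
qed

lemma mmul_id: "mmul M (1,0,0,1) = M" by (cases M) simp

lemma torusB_pow:
  "\<exists>u v. mpow torusB n = (u, v, v, u+v) \<and> u \<ge> 1 \<and> v \<ge> 0 \<and> u*(u+v) - v^2 = 1 \<and>
     2^n \<le> u+v \<and> u+v \<le> 3^n"
proof (induction n)
  case 0 then show ?case by simp
next
  case (Suc n)
  then obtain u v where h: "mpow torusB n = (u, v, v, u+v)" "u \<ge> 1" "v \<ge> 0" "u*(u+v) - v^2 = 1"
     "2^n \<le> u+v" "u+v \<le> 3^n" by blast
  have "mpow torusB (Suc n) = (u+v, u+2 * v, u+2 * v, (u+v)+(u+2 * v))"
    using h(1) by (simp add: torusB_def)
  moreover have "(u+v)*((u+v)+(u+2 * v)) - (u+2 * v)^2 = 1"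
    using h(4) by (simp add: power2_eq_square algebra_simps)
  moreover have "2^Suc n \<le> (u+v)+(u+2 * v)" "(u+v)+(u+2 * v) \<le> 3^Suc n" using h by auto
  ultimately show ?case using h by (intro exI[of _ "u+v"] exI[of _ "u+2 * v"]) auto
qed

lemma slope_form:
  "\<exists>u v. slope_elt n = (2*u+v, u+3 * v, u+v, u+2 * v) \<and> u \<ge> 1 \<and> v \<ge> 0 \<and> u*(u+v) - v^2 = 1 \<and>
     2^n \<le> u+v \<and> u+v \<le> 3^n"
proof -
  obtain u v where h: "mpow torusB n = (u, v, v, u+v)" "u \<ge> 1" "v \<ge> 0" "u*(u+v) - v^2 = 1"
     "2^n \<le> u+v" "u+v \<le> 3^n" using torusB_pow by blast
  have "slope_elt n = (2*u+v, u+3 * v, u+v, u+2 * v)"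
    unfolding slope_elt_def h(1) torusA_def by simp
  then show ?thesis using h by blast
qed

lemma root_trivial:
  assumes "n \<ge> 1" "R \<in> SL2Z" "k \<ge> 1"
    "mpow R k = slope_elt n \<or> mpow R k = mneg (slope_elt n)"
  shows "R = slope_elt n \<or> R = mneg (slope_elt n)"
proof -
  obtain a b c d where R: "R = (a,b,c,d)" by (cases R) auto
  have det: "a*d - b*c = 1" using assms(2) R by (simp add: SL2Z_def)
  obtain u v where S: "slope_elt n = (2*u+v, u+3 * v, u+v, u+2 * v)" "u \<ge> 1" "v \<ge> 0"
    "u*(u+v) - v^2 = 1" "2^n \<le> u+v" "u+v \<le> 3^n" using slope_form by blast
  obtain j where k: "k = Suc j" using assms(3) by (cases k) auto
  define t where "t = a + d"
  define s where "s = sq t (Suc j)"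
  define r where "r = sq t j"
  have P: "mpow R k = (s*a - r, s*b, s*c, s*d - r)"
    unfolding R k s_def r_def t_def by (rule mpow_cheb[OF det])
  have "(2::int)^1 \<le> 2^n" using assms(1) by (intro power_increasing) auto
  then have uv2: "u + v \<ge> 2" using S(5) by simp
  show ?thesis
  proof (cases "\<bar>t\<bar> \<le> 2")
    case True
    have "(s*a - r) + (s*d - r) = tau t (Suc j)"
      unfolding tau_sq s_def r_def t_def by (simp add: algebra_simps)
    then have tb: "\<bar>(s*a - r) + (s*d - r)\<bar> \<le> 2" using tau_bound[OF True] by simp
    from assms(4) have "(s*a - r) + (s*d - r) = 3*(u+v) \<or> (s*a - r) + (s*d - r) = -(3*(u+v))"
      unfolding P S(1) by auto
    then show ?thesis using tb uv2 by auto
  next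
    case False
    then have t3: "\<bar>t\<bar> \<ge> 3" by simp
    from assms(4) have "s*b = u + 3 * v \<and> s*c = u+v \<or> s*b = -(u + 3 * v) \<and> s*c = -(u+v)"
      unfolding P S(1) by auto
    then have d1: "s dvd (u + 3 * v)" and d2: "s dvd (u+v)"
      by (metis dvd_minus_iff dvd_triv_left)+
    have "s dvd (u + 3 * v) - (u+v)" using d1 d2 by (rule dvd_diff)
    then have "s dvd 2 * v" by (simp add: algebra_simps)
    then have d3: "s dvd v * (2 * v)" by (rule dvd_mult)
    have d4: "s dvd (2*u) * (u+v)" using d2 by (rule dvd_mult)
    have "s dvd (2*u) * (u+v) - v * (2 * v)" using d4 d3 by (rule dvd_diff)
    moreover have "(2*u) * (u+v) - v * (2 * v) = 2" using S(4) by (simp add: power2_eq_square algebra_simps)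
    ultimately have "s dvd 2" by simp
    then have "\<bar>s\<bar> \<le> 2" using zdvd_imp_le[of "\<bar>s\<bar>" 2] by simp
    then have "\<not> Suc j \<ge> 2" using sq_ge3[OF t3, of "Suc j"] unfolding s_def by linarith
    then have "j = 0" by simp
    then have "mpow R k = R" using k by (simp add: mmul_id)
    then show ?thesis using assms(4) by simp
  qed
qed



lemma gamma_eq: assumes "n \<ge> 1" shows "gamma_len n = transl_len (slope_elt n)"
proof -
  let ?M = "slope_elt n"
  have "{transl_len R | R k. R \<in> SL2Z \<and> k \<ge> 1 \<and> (mpow R k = ?M \<or> mpow R k = mneg ?M)}
        = {transl_len ?M}"
  proof (intro equalityI subsetI)
    fix x assume "x \<in> {transl_len R | R k. R \<in> SL2Z \<and> k \<ge> 1 \<and> (mpow R k = ?M \<or> mpow R k = mneg ?M)}"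
    then obtain R k where "x = transl_len R" "R \<in> SL2Z" "k \<ge> 1" "mpow R k = ?M \<or> mpow R k = mneg ?M"
      by blast
    then show "x \<in> {transl_len ?M}" using root_trivial[OF assms] transl_neg by fastforce
  next
    fix x assume "x \<in> {transl_len ?M}"
    moreover have "?M \<in> SL2Z"
    proof -
      obtain u v where S: "slope_elt n = (2*u+v, u+3 * v, u+v, u+2 * v)"
        "u*(u+v) - v^2 = 1" using slope_form by blast
      show ?thesis unfolding SL2Z_def S(1) using S(2) by (simp add: power2_eq_square algebra_simps)
    qed
    moreover have "mpow ?M 1 = ?M" by (simp add: mmul_id)
    ultimately show "x \<in> {transl_len R | R k. R \<in> SL2Z \<and> k \<ge> 1 \<and> (mpow R k = ?M \<or> mpow R k = mneg ?M)}"
      by (metis (mono_tags, lifting) mem_Collect_eq order_refl singletonD)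
  qed
  then show ?thesis unfolding gamma_len_def modular_geod_len_def by simp
qed

lemma gamma_bounds:
  assumes "n \<ge> 1"
  shows "real n * ln 4 \<le> gamma_len n \<and> gamma_len n \<le> real n * ln 180"
proof -
  obtain u v where S: "slope_elt n = (2*u+v, u+3 * v, u+v, u+2 * v)" "u \<ge> 1" "v \<ge> 0"
    "u*(u+v) - v^2 = 1" "2^n \<le> u+v" "u+v \<le> 3^n" using slope_form by blast
  have det: "(2*u+v)*(u+2 * v) - (u+3 * v)*(u+v) = 1" using S(4) by (simp add: power2_eq_square algebra_simps)
  define y where "y = real_of_int (u+v)"
  have y1: "2^n \<le> y" "y \<le> 3^n" unfolding y_def using S(5,6)
    by (metis of_int_le_iff of_int_numeral of_int_power)+
  have y2: "y \<ge> 1" using y1(1) by (meson one_le_numeral one_le_power order_trans)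
  have g: "gamma_len n = transl_len (2*u+v, u+3 * v, u+v, u+2 * v)" using gamma_eq[OF assms] S(1) by simp
  have tr: "(2*u+v) + (u+2 * v) = 3*(u+v)" by simp
  have "\<bar>(2*u+v) + (u+2 * v)\<bar> \<ge> 2" using S(2,3) by simp
  from transl_lower[OF det this]
  have L: "arcosh ((real_of_int (3*(u+v)))\<^sup>2 / 2 - 1) \<le> gamma_len n" unfolding g tr .
  have e: "(real_of_int (3*(u+v)))\<^sup>2 / 2 - 1 = 9 * y^2 / 2 - 1" unfolding y_def by (simp add: power2_eq_square algebra_simps)
  have "(2::real)^n * 2^n \<le> y * y" using y1(1) y2 by (intro mult_mono) auto
  then have "4^n \<le> y^2" by (simp add: power2_eq_square power_mult_distrib[symmetric])
  moreover have "y^2 \<ge> 1" using y2 by (simp add: one_le_power)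
  ultimately have X: "4^n \<le> 9 * y^2 / 2 - 1" by simp
  have "real n * ln 4 = ln (4^n)" by (simp add: ln_realpow)
  also have "\<dots> \<le> ln (9 * y^2 / 2 - 1)"
  proof -
    have X0: "(0::real) < 4^n" by simp
    then have pos: "0 < 9 * y^2 / 2 - 1" using X by linarith
    show ?thesis using X by (simp only: ln_le_cancel_iff[OF X0 pos])
  qed
  also have "\<dots> \<le> arcosh (9 * y^2 / 2 - 1)" 
  proof (rule arcosh_ge_ln)
    have "(1::real) \<le> 4^n" by (rule one_le_power) simp
    then show "1 \<le> 9 * y^2 / 2 - 1" using X by linarith
  qed
  finally have low: "real n * ln 4 \<le> gamma_len n" using L e by simp
  have U: "gamma_len n \<le> arcosh (1 + ((real_of_int ((u + 3 * v) + (u+v)))\<^sup>2 + (real_of_int ((u+2 * v) - (2*u+v)))\<^sup>2) / 2)"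
    unfolding g by (rule transl_upper[OF det])
  define X2 where "X2 = 1 + ((real_of_int ((u + 3 * v) + (u+v)))\<^sup>2 + (real_of_int ((u+2 * v) - (2*u+v)))\<^sup>2) / 2"
  have b1: "(real_of_int ((u + 3 * v) + (u+v)))\<^sup>2 \<le> 16 * y^2"
  proof -
    have "0 \<le> real_of_int ((u + 3 * v) + (u+v))" "real_of_int ((u + 3 * v) + (u+v)) \<le> 4 * y"
      unfolding y_def using S(2,3) by simp_all
    then have "(real_of_int ((u + 3 * v) + (u+v)))\<^sup>2 \<le> (4*y)^2" by (intro power_mono) auto
    then show ?thesis by (simp add: power_mult_distrib)
  qed
  have b2: "(real_of_int ((u+2 * v) - (2*u+v)))\<^sup>2 \<le> y^2"
  proof -
    have "\<bar>real_of_int ((u+2 * v) - (2*u+v))\<bar> \<le> y" unfolding y_def using S(2,3) by simp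
    then show ?thesis by (metis abs_le_square_iff abs_of_nonneg y2 order_trans zero_le_one)
  qed
  have "(3::real)^n * 3^n = 9^n" by (simp add: power_mult_distrib[symmetric])
  moreover have "y * y \<le> 3^n * 3^n" using y1 y2 by (intro mult_mono) auto
  ultimately have y9: "y^2 \<le> 9^n" by (simp add: power2_eq_square)
  have X2a: "1 \<le> X2" unfolding X2_def by simp
  have yy: "1 \<le> y^2" using y2 by (simp add: one_le_power)
  have gen: "1 + (A+B)/2 \<le> 10 * 9^n" if "A \<le> 16*y^2" "B \<le> y^2" for A B :: real
  proof -
    have "A + B \<le> 17 * 9^n" "1 \<le> (9::real)^n" using that y9 yy by linarith+
    then have "(A + B)/2 \<le> 17 * 9^n / 2" by (simp add: divide_right_mono)
    then show ?thesis using \<open>1 \<le> (9::real)^n\<close> by linarith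
  qed
  have X2b: "X2 \<le> 10 * 9^n" unfolding X2_def by (rule gen[OF b1 b2])
  have "gamma_len n \<le> arcosh X2" using U X2_def by simp
  also have "\<dots> \<le> ln (2 * X2)" by (rule arcosh_le_ln[OF X2a])
  also have "\<dots> \<le> ln (20 * 9^n)" using X2a X2b by (subst ln_le_cancel_iff) auto
  also have "\<dots> = ln 20 + real n * ln 9" by (simp add: ln_mult_pos ln_realpow)
  also have "\<dots> \<le> real n * ln 20 + real n * ln 9"
  proof -
    have "ln 20 \<le> real n * ln (20::real)" using assms by (simp add: mult_le_cancel_right1)
    then show ?thesis by simp
  qed
  also have "\<dots> = real n * ln 180"
  proof -
    have "ln (180::real) = ln (20 * 9)" by simp
    also have "\<dots> = ln 20 + ln 9" by (rule ln_mult_pos) simp_all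
    finally have "ln (180::real) = ln 20 + ln 9" .
    then show ?thesis by (simp add: algebra_simps)
  qed
  finally show ?thesis using low by simp
qed



lemma gauss_real: "2 * (\<Sum>i=1..n. real i) = real n * (real n + 1)"
  by (induction n) (simp_all add: algebra_simps)

theorem lemma7p2:
  shows "\<exists>A B C D :: real. A > 0 \<and> C > 0 \<and>
    (\<forall>n::nat. n \<ge> 1 \<longrightarrow>
       A * (real n)\<^sup>2 + B \<le> total_len n \<and> total_len n \<le> C * (real n)\<^sup>2 + D)"
proof (intro exI conjI allI impI)
  show "ln 4 / 2 > (0::real)" by simp
  show "ln 180 > (0::real)" by simp
  fix n :: nat assume n: "n \<ge> 1"
  have lo: "(\<Sum>i=1..n. real i * ln 4) \<le> total_len n"
    unfolding total_len_def by (rule sum_mono) (use gamma_bounds in auto)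
  have hi: "total_len n \<le> (\<Sum>i=1..n. real i * ln 180)"
    unfolding total_len_def by (rule sum_mono) (use gamma_bounds in auto)
  have s1: "(\<Sum>i=1..n. real i * c) = real n * (real n + 1) / 2 * c" for c :: real
    using gauss_real[of n] by (simp add: sum_distrib_right[symmetric])
  have l4: "ln (4::real) > 0" "ln (180::real) > 0" by simp_all
  have "ln 4 / 2 * (real n)\<^sup>2 + 0 \<le> real n * (real n + 1) / 2 * ln 4"
    using l4 by (simp add: power2_eq_square field_simps)
  also have "\<dots> = (\<Sum>i=1..n. real i * ln 4)" using s1[of "ln 4"] by simp
  also note lo
  finally show "ln 4 / 2 * (real n)\<^sup>2 + 0 \<le> total_len n" .
  have "real n * (real n + 1) / 2 * ln 180 \<le> ln 180 * (real n)\<^sup>2 + 0"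
  proof -
    have "real n + 1 \<le> 2 * real n" using n by simp
    then have "real n * (real n + 1) \<le> real n * (2 * real n)" by (intro mult_left_mono) auto
    then have "real n * (real n + 1) * ln 180 \<le> real n * (2 * real n) * ln 180"
      using l4 by (intro mult_right_mono) auto
    then show ?thesis by (simp add: power2_eq_square field_simps)
  qed
  have "total_len n \<le> (\<Sum>i=1..n. real i * ln 180)" by (rule hi)
  also have "\<dots> = real n * (real n + 1) / 2 * ln 180" using s1[of "ln 180"] by simp
  also note \<open>real n * (real n + 1) / 2 * ln 180 \<le> ln 180 * (real n)\<^sup>2 + 0\<close>
  finally show "total_len n \<le> ln 180 * (real n)\<^sup>2 + 0" .
qed
end
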